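(* Let $(H,\cdot,1,\Delta,\varepsilon,\rhd)$ be a right Post-Hopf algebra which is connected as a coalgebra, with coradical filtration $(H^{\leq n})_{n\in\mathbb{N}}$. Then for every $n\in\mathbb{N}$, $H^{\leq n}\rhd H\subseteq H^{\leq n}$.
   Context: With $\rho(x)=x-\varepsilon(x)1$, $\tilde\Delta(x)=\Delta(x)-1\otimes x-x\otimes 1$ on $\ker\varepsilon$, $\tilde\Delta(1)=0$, $\tilde\Delta^{(0)}=\rho$, $\tilde\Delta^{(1)}=\tilde\Delta$, $\tilde\Delta^{(k)}=(\tilde\Delta\otimes\mathrm{Id}^{\otimes k-1})\circ\tilde\Delta^{(k-1)}$: $H$ is connected as a coalgebra if every $x$ satisfies $\tilde\Delta^{(n)}(x)=0$ for some $n$, and $H^{\leq n}=\{x\in H:\tilde\Delta^{(n)}(x)=0\}$. A right Post-Hopf algebra is a Hopf algebra $(H,\cdot,1,\Delta,\varepsilon)$ with a coalgebra morphism $\rhd:H\otimes H\to H$ such that $(x\cdot y)\rhd z=(x\rhd z^{(1)})\cdot(y\rhd z^{(2)})$, $(x\rhd y)\rhd z=x\rhd\big((y\rhd z^{(1)})\cdot z^{(2)}\big)$ (Sweedler notation), and $\gamma_\rhd(x)(y)=y\rhd x$ is invertible in the convolution algebra $\mathrm{Hom}(H,\mathrm{End}(H))$ with product $(f\star g)(x)=f(x^{(1)})\circ g(x^{(2)})$. *)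

theory Defs
  imports "HOL-Library.Poly_Mapping"
begin

(*
  Vector spaces over a field 'k are modelled as free vector spaces with a chosen basis:
  H = ('b \<Rightarrow>\<^sub>0 'k) (finitely supported functions on the basis 'b).
  Since every vector space has a basis, this loses no generality.
  Tensor products are free vector spaces on products of the bases:
  H \<otimes> H = ('b \<times> 'b \<Rightarrow>\<^sub>0 'k), H \<otimes> H \<otimes> H = ('b \<times> 'b \<times> 'b \<Rightarrow>\<^sub>0 'k),
  and H^{\<otimes> m} = ('b list \<Rightarrow>\<^sub>0 'k) restricted to Poly_Mapping.keys of length m.
*)

definition vsmul :: "'k::field \<Rightarrow> ('a \<Rightarrow>\<^sub>0 'k) \<Rightarrow> ('a \<Rightarrow>\<^sub>0 'k)" where
  "vsmul c x = Poly_Mapping.map (\<lambda>a. c * a) x"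

definition basisv :: "'a \<Rightarrow> ('a \<Rightarrow>\<^sub>0 'k::field)" where
  "basisv i = Poly_Mapping.single i 1"

definition linear_map :: "(('a \<Rightarrow>\<^sub>0 'k::field) \<Rightarrow> ('c \<Rightarrow>\<^sub>0 'k)) \<Rightarrow> bool" where
  "linear_map f \<longleftrightarrow> (\<forall>x y. f (x + y) = f x + f y) \<and> (\<forall>c x. f (vsmul c x) = vsmul c (f x))"

definition linear_functional :: "(('a \<Rightarrow>\<^sub>0 'k::field) \<Rightarrow> 'k) \<Rightarrow> bool" where
  "linear_functional f \<longleftrightarrow> (\<forall>x y. f (x + y) = f x + f y) \<and> (\<forall>c x. f (vsmul c x) = c * f x)"

definition bilinear_map ::
  "(('a \<Rightarrow>\<^sub>0 'k::field) \<Rightarrow> ('c \<Rightarrow>\<^sub>0 'k) \<Rightarrow> ('d \<Rightarrow>\<^sub>0 'k)) \<Rightarrow> bool" where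
  "bilinear_map f \<longleftrightarrow> (\<forall>x. linear_map (f x)) \<and> (\<forall>y. linear_map (\<lambda>x. f x y))"

definition tens :: "('a \<Rightarrow>\<^sub>0 'k::field) \<Rightarrow> ('c \<Rightarrow>\<^sub>0 'k) \<Rightarrow> ('a \<times> 'c \<Rightarrow>\<^sub>0 'k)" where
  "tens x y = (\<Sum>i\<in>Poly_Mapping.keys x. (\<Sum>j\<in>Poly_Mapping.keys y. Poly_Mapping.single (i, j) (Poly_Mapping.lookup x i * Poly_Mapping.lookup y j)))"

(*Sweedler-type evaluation: for t = \<Sum> t_(i,j) e_i \<otimes> e_j and f bilinear,
  sw2 t f = \<Sum> t_(i,j) f e_i e_j, i.e. the linear map on A \<otimes> C induced by f, applied to t.
  In particular sw2 (\<Delta> x) f = \<Sum> f x(1) x(2).*)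
definition sw2 :: "('a \<times> 'c \<Rightarrow>\<^sub>0 'k::field) \<Rightarrow>
    (('a \<Rightarrow>\<^sub>0 'k) \<Rightarrow> ('c \<Rightarrow>\<^sub>0 'k) \<Rightarrow> ('d \<Rightarrow>\<^sub>0 'k)) \<Rightarrow> ('d \<Rightarrow>\<^sub>0 'k)" where
  "sw2 t f = (\<Sum>p\<in>Poly_Mapping.keys t. vsmul (Poly_Mapping.lookup t p) (f (basisv (fst p)) (basisv (snd p))))"

definition sw2s :: "('a \<times> 'c \<Rightarrow>\<^sub>0 'k::field) \<Rightarrow>
    (('a \<Rightarrow>\<^sub>0 'k) \<Rightarrow> ('c \<Rightarrow>\<^sub>0 'k) \<Rightarrow> 'k) \<Rightarrow> 'k" where
  "sw2s t f = (\<Sum>p\<in>Poly_Mapping.keys t. Poly_Mapping.lookup t p * f (basisv (fst p)) (basisv (snd p)))"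

definition reassoc :: "(('a \<times> 'b) \<times> 'c \<Rightarrow>\<^sub>0 'k::field) \<Rightarrow> ('a \<times> 'b \<times> 'c \<Rightarrow>\<^sub>0 'k)" where
  "reassoc t = (\<Sum>p\<in>Poly_Mapping.keys t. Poly_Mapping.single (fst (fst p), snd (fst p), snd p) (Poly_Mapping.lookup t p))"

definition hopf_algebra ::
  "(('b \<Rightarrow>\<^sub>0 'k::field) \<Rightarrow> ('b \<Rightarrow>\<^sub>0 'k) \<Rightarrow> ('b \<Rightarrow>\<^sub>0 'k)) \<Rightarrow> ('b \<Rightarrow>\<^sub>0 'k) \<Rightarrow>
   (('b \<Rightarrow>\<^sub>0 'k) \<Rightarrow> ('b \<times> 'b \<Rightarrow>\<^sub>0 'k)) \<Rightarrow> (('b \<Rightarrow>\<^sub>0 'k) \<Rightarrow> 'k) \<Rightarrow> bool" where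
  "hopf_algebra mult u \<Delta> \<epsilon> \<longleftrightarrow>
     bilinear_map mult \<and>
     (\<forall>x y z. mult (mult x y) z = mult x (mult y z)) \<and>
     (\<forall>x. mult u x = x \<and> mult x u = x) \<and>
     linear_map \<Delta> \<and> linear_functional \<epsilon> \<and>
     (\<forall>x. reassoc (sw2 (\<Delta> x) (\<lambda>a b. tens (\<Delta> a) b)) = sw2 (\<Delta> x) (\<lambda>a b. tens a (\<Delta> b))) \<and>
     (\<forall>x. sw2 (\<Delta> x) (\<lambda>a b. vsmul (\<epsilon> a) b) = x \<and> sw2 (\<Delta> x) (\<lambda>a b. vsmul (\<epsilon> b) a) = x) \<and>
     (\<forall>x y. \<Delta> (mult x y) = sw2 (\<Delta> x) (\<lambda>a b. sw2 (\<Delta> y) (\<lambda>c d. tens (mult a c) (mult b d)))) \<and>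
     \<Delta> u = tens u u \<and>
     (\<forall>x y. \<epsilon> (mult x y) = \<epsilon> x * \<epsilon> y) \<and> \<epsilon> u = 1 \<and>
     (\<exists>S. linear_map S \<and>
        (\<forall>x. sw2 (\<Delta> x) (\<lambda>a b. mult (S a) b) = vsmul (\<epsilon> x) u \<and>
             sw2 (\<Delta> x) (\<lambda>a b. mult a (S b)) = vsmul (\<epsilon> x) u))"

(*Right Post-Hopf algebra: rhd x y = x \<rhd> y, a coalgebra morphism H \<otimes> H \<rightarrow> H
  (given as a bilinear map), with the two axioms, and \<gamma>(x)(y) = y \<rhd> x invertible in the
  convolution algebra Hom(H, End(H)) (whose unit is x \<mapsto> \<epsilon>(x) id).*)
definition right_post_hopf_algebra ::
  "(('b \<Rightarrow>\<^sub>0 'k::field) \<Rightarrow> ('b \<Rightarrow>\<^sub>0 'k) \<Rightarrow> ('b \<Rightarrow>\<^sub>0 'k)) \<Rightarrow> ('b \<Rightarrow>\<^sub>0 'k) \<Rightarrow>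
   (('b \<Rightarrow>\<^sub>0 'k) \<Rightarrow> ('b \<times> 'b \<Rightarrow>\<^sub>0 'k)) \<Rightarrow> (('b \<Rightarrow>\<^sub>0 'k) \<Rightarrow> 'k) \<Rightarrow>
   (('b \<Rightarrow>\<^sub>0 'k) \<Rightarrow> ('b \<Rightarrow>\<^sub>0 'k) \<Rightarrow> ('b \<Rightarrow>\<^sub>0 'k)) \<Rightarrow> bool" where
  "right_post_hopf_algebra mult u \<Delta> \<epsilon> rhd \<longleftrightarrow>
     hopf_algebra mult u \<Delta> \<epsilon> \<and>
     bilinear_map rhd \<and>
     (\<forall>x y. \<Delta> (rhd x y) = sw2 (\<Delta> x) (\<lambda>a b. sw2 (\<Delta> y) (\<lambda>c d. tens (rhd a c) (rhd b d)))) \<and>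
     (\<forall>x y. \<epsilon> (rhd x y) = \<epsilon> x * \<epsilon> y) \<and>
     (\<forall>x y z. rhd (mult x y) z = sw2 (\<Delta> z) (\<lambda>c d. mult (rhd x c) (rhd y d))) \<and>
     (\<forall>x y z. rhd (rhd x y) z = rhd x (sw2 (\<Delta> z) (\<lambda>c d. mult (rhd y c) d))) \<and>
     (\<exists>\<beta>. bilinear_map \<beta> \<and>
        (\<forall>x y. sw2 (\<Delta> x) (\<lambda>a b. rhd (\<beta> b y) a) = vsmul (\<epsilon> x) y \<and>
               sw2 (\<Delta> x) (\<lambda>a b. \<beta> a (rhd y b)) = vsmul (\<epsilon> x) y))"

definition rho_map :: "('b \<Rightarrow>\<^sub>0 'k::field) \<Rightarrow> (('b \<Rightarrow>\<^sub>0 'k) \<Rightarrow> 'k) \<Rightarrow> ('b \<Rightarrow>\<^sub>0 'k) \<Rightarrow> ('b \<Rightarrow>\<^sub>0 'k)" where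
  "rho_map u \<epsilon> x = x - vsmul (\<epsilon> x) u"

(*Reduced coproduct: the unique linear map equal to \<Delta>(x) - 1\<otimes>x - x\<otimes>1 on ker \<epsilon>
  and sending 1 to 0.*)
definition red_coprod :: "('b \<Rightarrow>\<^sub>0 'k::field) \<Rightarrow> (('b \<Rightarrow>\<^sub>0 'k) \<Rightarrow> ('b \<times> 'b \<Rightarrow>\<^sub>0 'k)) \<Rightarrow>
    (('b \<Rightarrow>\<^sub>0 'k) \<Rightarrow> 'k) \<Rightarrow> ('b \<Rightarrow>\<^sub>0 'k) \<Rightarrow> ('b \<times> 'b \<Rightarrow>\<^sub>0 'k)" where
  "red_coprod u \<Delta> \<epsilon> x = \<Delta> x - tens u x - tens x u + vsmul (\<epsilon> x) (tens u u)"

(*Iterated reduced coproduct \<Delta>~^(n) : H \<rightarrow> H^{\<otimes>(n+1)}, tensor words as lists;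
  \<Delta>~^(0) = \<rho>, \<Delta>~^(k) = (\<Delta>~ \<otimes> Id^{\<otimes> k-1}) \<circ> \<Delta>~^(k-1) (\<Delta>~ applied to the first factor).*)
fun iter_red_coprod :: "('b \<Rightarrow>\<^sub>0 'k::field) \<Rightarrow> (('b \<Rightarrow>\<^sub>0 'k) \<Rightarrow> ('b \<times> 'b \<Rightarrow>\<^sub>0 'k)) \<Rightarrow>
    (('b \<Rightarrow>\<^sub>0 'k) \<Rightarrow> 'k) \<Rightarrow> nat \<Rightarrow> ('b \<Rightarrow>\<^sub>0 'k) \<Rightarrow> ('b list \<Rightarrow>\<^sub>0 'k)" where
  "iter_red_coprod u \<Delta> \<epsilon> 0 x =
     (\<Sum>i\<in>Poly_Mapping.keys (rho_map u \<epsilon> x). Poly_Mapping.single [i] (Poly_Mapping.lookup (rho_map u \<epsilon> x) i))"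
| "iter_red_coprod u \<Delta> \<epsilon> (Suc k) x =
     (let T = iter_red_coprod u \<Delta> \<epsilon> k x in
      \<Sum>w\<in>Poly_Mapping.keys T. vsmul (Poly_Mapping.lookup T w)
        (let D = red_coprod u \<Delta> \<epsilon> (basisv (hd w)) in
         \<Sum>p\<in>Poly_Mapping.keys D. Poly_Mapping.single (fst p # snd p # tl w) (Poly_Mapping.lookup D p)))"

definition coalg_connected :: "('b \<Rightarrow>\<^sub>0 'k::field) \<Rightarrow> (('b \<Rightarrow>\<^sub>0 'k) \<Rightarrow> ('b \<times> 'b \<Rightarrow>\<^sub>0 'k)) \<Rightarrow>
    (('b \<Rightarrow>\<^sub>0 'k) \<Rightarrow> 'k) \<Rightarrow> bool" where
  "coalg_connected u \<Delta> \<epsilon> \<longleftrightarrow> (\<forall>x. \<exists>n. iter_red_coprod u \<Delta> \<epsilon> n x = 0)"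

definition coradical_filt :: "('b \<Rightarrow>\<^sub>0 'k::field) \<Rightarrow> (('b \<Rightarrow>\<^sub>0 'k) \<Rightarrow> ('b \<times> 'b \<Rightarrow>\<^sub>0 'k)) \<Rightarrow>
    (('b \<Rightarrow>\<^sub>0 'k) \<Rightarrow> 'k) \<Rightarrow> nat \<Rightarrow> ('b \<Rightarrow>\<^sub>0 'k) set" where
  "coradical_filt u \<Delta> \<epsilon> n = {x. iter_red_coprod u \<Delta> \<epsilon> n x = 0}"

end

theory Submission
  imports Defs
begin


lemma lookup_vsmul[simp]: "Poly_Mapping.lookup (vsmul c x) k = c * Poly_Mapping.lookup x k"
  by (simp add: vsmul_def Poly_Mapping.map.rep_eq when_def)

lemma vsmul_zero[simp]: "vsmul 0 x = 0" "vsmul c 0 = 0"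
  by (auto intro!: poly_mapping_eqI)

lemma vsmul_one[simp]: "vsmul 1 x = x"
  by (auto intro!: poly_mapping_eqI)

lemma vsmul_add: "vsmul c (x + y) = vsmul c x + vsmul c y"
  by (auto intro!: poly_mapping_eqI simp: lookup_add algebra_simps)
lemma vsmul_add2: "vsmul (c + d) x = vsmul c x + vsmul d x"
  by (auto intro!: poly_mapping_eqI simp: lookup_add algebra_simps)
lemma vsmul_diff: "vsmul c (x - y) = vsmul c x - vsmul c y"
  by (rule poly_mapping_eqI) (simp only: lookup_minus lookup_vsmul right_diff_distrib)
lemma vsmul_vsmul[simp]: "vsmul c (vsmul d x) = vsmul (c * d) x"
  by (auto intro!: poly_mapping_eqI simp: algebra_simps)
lemma vsmul_sum: "vsmul c (sum f A) = (\<Sum>a\<in>A. vsmul c (f a))"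
  by (induct A rule: infinite_finite_induct) (auto simp: vsmul_add)
lemma vsmul_single: "vsmul c (Poly_Mapping.single p d) = Poly_Mapping.single p (c * d)"
  by (auto intro!: poly_mapping_eqI simp: lookup_single when_def)
lemma vsmul_basisv: "vsmul c (basisv p) = Poly_Mapping.single p c"
  by (simp add: basisv_def vsmul_single)

definition lin_ext :: "('a \<Rightarrow> ('c \<Rightarrow>\<^sub>0 'k::field)) \<Rightarrow> ('a \<Rightarrow>\<^sub>0 'k) \<Rightarrow> ('c \<Rightarrow>\<^sub>0 'k)" where
  "lin_ext g t = (\<Sum>p\<in>Poly_Mapping.keys t. vsmul (Poly_Mapping.lookup t p) (g p))"

lemma lin_ext_superset:
  assumes "finite S" "Poly_Mapping.keys t \<subseteq> S"
  shows "lin_ext g t = (\<Sum>p\<in>S. vsmul (Poly_Mapping.lookup t p) (g p))"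
  unfolding lin_ext_def
  by (rule sum.mono_neutral_left) (use assms in \<open>auto simp: in_keys_iff\<close>)

lemma lin_ext_add: "lin_ext g (x + y) = lin_ext g x + lin_ext g y"
proof -
  let ?S = "Poly_Mapping.keys x \<union> Poly_Mapping.keys y"
  have "Poly_Mapping.keys (x + y) \<subseteq> ?S" by (rule keys_add)
  then show ?thesis
    by (subst (1 2 3) lin_ext_superset[where S = ?S]) (auto simp: lookup_add vsmul_add2 sum.distrib)
qed

lemma lin_ext_smul: "lin_ext g (vsmul c x) = vsmul c (lin_ext g x)"
proof -
  have "Poly_Mapping.keys (vsmul c x) \<subseteq> Poly_Mapping.keys x" by (auto simp: in_keys_iff)
  then show ?thesis
    by (subst (1 2) lin_ext_superset[where S = "Poly_Mapping.keys x"]) (auto simp: vsmul_sum)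
qed

lemma linear_lin_ext: "linear_map (lin_ext g)"
  by (simp add: linear_map_def lin_ext_add lin_ext_smul)

lemma lin_ext_basisv[simp]: "lin_ext g (basisv p) = g p"
  by (simp add: lin_ext_def basisv_def)

lemma lin_ext_zero[simp]: "lin_ext g 0 = 0"
  by (simp add: lin_ext_def)

lemma lin_ext_cong: "(\<And>p. p \<in> Poly_Mapping.keys t \<Longrightarrow> g p = h p) \<Longrightarrow> lin_ext g t = lin_ext h t"
  by (simp add: lin_ext_def)

lemma lin_ext_expand: "lin_ext basisv t = t"
proof (rule poly_mapping_eqI)
  fix k
  have "Poly_Mapping.lookup (lin_ext basisv t) k = (\<Sum>p\<in>Poly_Mapping.keys t. Poly_Mapping.lookup t p * (if p = k then 1 else 0))"
    by (simp add: lin_ext_def lookup_sum basisv_def lookup_single when_def eq_commute)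
  also have "\<dots> = Poly_Mapping.lookup t k"
    by (simp add: if_distrib sum.delta in_keys_iff cong: if_cong)
  finally show "Poly_Mapping.lookup (lin_ext basisv t) k = Poly_Mapping.lookup t k" .
qed

lemma sum_single_lin_ext: "(\<Sum>p\<in>Poly_Mapping.keys t. Poly_Mapping.single (h p) (Poly_Mapping.lookup t p)) = lin_ext (\<lambda>p. basisv (h p)) t"
  by (simp add: lin_ext_def vsmul_basisv)

lemma linear_add: "linear_map f \<Longrightarrow> f (x + y) = f x + f y"
  by (simp add: linear_map_def)
lemma linear_smul: "linear_map f \<Longrightarrow> f (vsmul c x) = vsmul c (f x)"
  by (simp add: linear_map_def)
lemma linear_zero: "linear_map f \<Longrightarrow> f 0 = 0"
  using linear_smul[of f 0 0] by simp
lemma vsmul_neg1: "vsmul (-1) x = - x"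
  by (auto intro!: poly_mapping_eqI)
lemma linear_neg: "linear_map f \<Longrightarrow> f (- x) = - f x"
  using linear_smul[of f "-1" x] by (simp add: vsmul_neg1)
lemma linear_diff: "linear_map f \<Longrightarrow> f (x - y) = f x - f y"
proof -
  assume a: "linear_map f"
  have "f (x + - y) = f x + f (-y)" by (rule linear_add[OF a])
  then show ?thesis by (simp add: linear_neg[OF a])
qed
lemma linear_sum: "linear_map f \<Longrightarrow> f (sum g A) = (\<Sum>a\<in>A. f (g a))"
  by (induct A rule: infinite_finite_induct) (auto simp: linear_zero linear_add)

lemma linear_lin_ext_comp: "linear_map f \<Longrightarrow> f (lin_ext g t) = lin_ext (\<lambda>p. f (g p)) t"
  by (simp add: lin_ext_def linear_sum linear_smul)

lemma linear_unique: "linear_map f \<Longrightarrow> f t = lin_ext (\<lambda>p. f (basisv p)) t"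
  using linear_lin_ext_comp[of f basisv t] by (simp add: lin_ext_expand)

lemma linear_eq: "linear_map f \<Longrightarrow> linear_map g \<Longrightarrow> (\<And>p. f (basisv p) = g (basisv p)) \<Longrightarrow> f t = g t"
proof -
  assume a: "linear_map f" "linear_map g" "\<And>p. f (basisv p) = g (basisv p)"
  have "f t = lin_ext (\<lambda>p. f (basisv p)) t" by (rule linear_unique[OF a(1)])
  also have "\<dots> = lin_ext (\<lambda>p. g (basisv p)) t" using a(3) by simp
  also have "\<dots> = g t" by (rule linear_unique[OF a(2), symmetric])
  finally show ?thesis .
qed

lemma linear_comp: "linear_map f \<Longrightarrow> linear_map g \<Longrightarrow> linear_map (\<lambda>x. f (g x))"
  by (simp add: linear_map_def)
lemma linear_id: "linear_map (\<lambda>x. x)" by (simp add: linear_map_def)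
lemma linear_const0: "linear_map (\<lambda>x. 0)" by (simp add: linear_map_def)
lemma linear_plus: "linear_map f \<Longrightarrow> linear_map g \<Longrightarrow> linear_map (\<lambda>x. f x + g x)"
  by (simp add: linear_map_def vsmul_add)
lemma linear_minus: "linear_map f \<Longrightarrow> linear_map g \<Longrightarrow> linear_map (\<lambda>x. f x - g x)"
  by (simp add: linear_map_def vsmul_diff)
lemma linear_vsmul_fun: "linear_map f \<Longrightarrow> linear_map (\<lambda>x. vsmul c (f x))"
  by (simp add: linear_map_def vsmul_add mult.commute)
lemma linear_functional_smul: "linear_functional e \<Longrightarrow> linear_map (\<lambda>x. vsmul (e x) T)"
  by (simp add: linear_map_def linear_functional_def vsmul_add2)

lemma lin_ext_linear_fun: "(\<And>p. linear_map (G p)) \<Longrightarrow> linear_map (\<lambda>x. lin_ext (\<lambda>p. G p x) t)"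
  by (simp add: linear_map_def lin_ext_def vsmul_add sum.distrib vsmul_sum mult.commute)


lemma tens_lin: "tens x y = lin_ext (\<lambda>i. lin_ext (\<lambda>j. basisv (i,j)) y) x"
  by (simp add: tens_def lin_ext_def vsmul_sum vsmul_basisv vsmul_single)

lemma linear_tens1: "linear_map (\<lambda>x. tens x y)"
  unfolding tens_lin by (rule linear_lin_ext)
lemma linear_tens2: "linear_map (\<lambda>y. tens x y)"
  unfolding tens_lin by (rule lin_ext_linear_fun) (rule linear_lin_ext)
lemma bilinear_tens: "bilinear_map tens"
  unfolding bilinear_map_def using linear_tens1 linear_tens2 by blast
lemma tens_basisv[simp]: "tens (basisv i) (basisv j) = basisv (i, j)"
  by (simp add: tens_lin)

lemma sw2_lin: "sw2 t f = lin_ext (\<lambda>p. f (basisv (fst p)) (basisv (snd p))) t"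
  by (simp add: sw2_def lin_ext_def)
lemma linear_sw2: "linear_map (\<lambda>t. sw2 t f)"
  unfolding sw2_lin by (rule linear_lin_ext)
lemma sw2_linear_fun: "(\<And>a b. linear_map (F a b)) \<Longrightarrow> linear_map (\<lambda>z. sw2 t (\<lambda>a b. F a b z))"
  unfolding sw2_lin by (rule lin_ext_linear_fun) simp
lemma sw2_comp: "linear_map g \<Longrightarrow> g (sw2 t f) = sw2 t (\<lambda>a b. g (f a b))"
  unfolding sw2_lin by (simp add: linear_lin_ext_comp)
lemma sw2_basisv[simp]: "sw2 (basisv p) f = f (basisv (fst p)) (basisv (snd p))"
  by (simp add: sw2_lin)
lemma sw2_cong: "(\<And>a b. f a b = g a b) \<Longrightarrow> sw2 t f = sw2 t g"
  by (simp add: sw2_def)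

lemma bilinear_map_iff: "bilinear_map F \<longleftrightarrow> (\<forall>x. linear_map (F x)) \<and> (\<forall>y. linear_map (\<lambda>x. F x y))"
  by (simp add: bilinear_map_def)

lemma linear_eq_fun: "linear_map f \<Longrightarrow> linear_map g \<Longrightarrow> (\<And>p. f (basisv p) = g (basisv p)) \<Longrightarrow> f = g"
  by (rule ext) (rule linear_eq)

lemma sw2_tens:
  assumes F1: "\<And>y. linear_map (\<lambda>x. F x y)" and F2: "\<And>x. linear_map (\<lambda>y. F x y)"
  shows "sw2 (tens x y) F = F x y"
proof -
  have b: "sw2 (tens (basisv i) y) F = F (basisv i) y" for i
    by (rule linear_eq[where f = "\<lambda>y. sw2 (tens (basisv i) y) F" and g = "\<lambda>y. F (basisv i) y"])
       (auto intro: linear_comp[OF linear_sw2 linear_tens2] F2)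
  show ?thesis
    by (rule linear_eq[where f = "\<lambda>x. sw2 (tens x y) F" and g = "\<lambda>x. F x y"])
       (auto intro: linear_comp[OF linear_sw2 linear_tens1] F1 b)
qed


definition tri :: "(('a \<Rightarrow>\<^sub>0 'k::field) \<Rightarrow> ('a \<Rightarrow>\<^sub>0 'k) \<Rightarrow> ('a \<Rightarrow>\<^sub>0 'k) \<Rightarrow> ('c \<Rightarrow>\<^sub>0 'k)) \<Rightarrow> ('a \<times> 'a \<times> 'a \<Rightarrow>\<^sub>0 'k) \<Rightarrow> ('c \<Rightarrow>\<^sub>0 'k)" where
  "tri G t = lin_ext (\<lambda>q. G (basisv (fst q)) (basisv (fst (snd q))) (basisv (snd (snd q)))) t"
definition tri' :: "(('a \<Rightarrow>\<^sub>0 'k::field) \<Rightarrow> ('a \<Rightarrow>\<^sub>0 'k) \<Rightarrow> ('a \<Rightarrow>\<^sub>0 'k) \<Rightarrow> ('c \<Rightarrow>\<^sub>0 'k)) \<Rightarrow> (('a \<times> 'a) \<times> 'a \<Rightarrow>\<^sub>0 'k) \<Rightarrow> ('c \<Rightarrow>\<^sub>0 'k)" where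
  "tri' G t = lin_ext (\<lambda>q. G (basisv (fst (fst q))) (basisv (snd (fst q))) (basisv (snd q))) t"

lemma linear_tri: "linear_map (tri G)"
  unfolding tri_def by (rule linear_lin_ext)
lemma linear_tri': "linear_map (tri' G)"
  unfolding tri'_def by (rule linear_lin_ext)

lemma tri_reassoc: "tri G (reassoc T) = tri' G T"
proof -
  have "reassoc T = lin_ext (\<lambda>q. basisv (fst (fst q), snd (fst q), snd q)) T"
    unfolding reassoc_def by (rule sum_single_lin_ext)
  then have "tri G (reassoc T) = lin_ext (\<lambda>q. tri G (basisv (fst (fst q), snd (fst q), snd q))) T"
    by (simp only: linear_lin_ext_comp[OF linear_tri])
  also have "\<dots> = tri' G T"
    by (simp only: tri_def tri'_def lin_ext_basisv fst_conv snd_conv)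
  finally show ?thesis .
qed

locale trilin =
  fixes G :: "('a \<Rightarrow>\<^sub>0 'k::field) \<Rightarrow> ('a \<Rightarrow>\<^sub>0 'k) \<Rightarrow> ('a \<Rightarrow>\<^sub>0 'k) \<Rightarrow> ('c \<Rightarrow>\<^sub>0 'k)"
  assumes G1: "\<And>y z. linear_map (\<lambda>x. G x y z)"
    and G2: "\<And>x z. linear_map (\<lambda>y. G x y z)"
    and G3: "\<And>x y. linear_map (\<lambda>z. G x y z)"
begin

lemma tri'_tens: "tri' G (tens D b) = sw2 D (\<lambda>c d. G c d b)"
proof -
  have b: "tri' G (tens (basisv p) b) = G (basisv (fst p)) (basisv (snd p)) b" for p
  proof (rule linear_eq[where f = "\<lambda>b. tri' G (tens (basisv p) b)"])
    show "linear_map (\<lambda>b. tri' G (tens (basisv p) b))"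
      by (rule linear_comp[OF linear_tri' linear_tens2])
    show "linear_map (\<lambda>b. G (basisv (fst p)) (basisv (snd p)) b)" by (rule G3)
    fix q show "tri' G (tens (basisv p) (basisv q)) = G (basisv (fst p)) (basisv (snd p)) (basisv q)"
      by (simp only: tens_basisv tri'_def lin_ext_basisv fst_conv snd_conv)
  qed
  show ?thesis
  proof (rule linear_eq[where f = "\<lambda>D. tri' G (tens D b)"])
    show "linear_map (\<lambda>D. tri' G (tens D b))" by (rule linear_comp[OF linear_tri' linear_tens1])
    show "linear_map (\<lambda>D. sw2 D (\<lambda>c d. G c d b))" by (rule linear_sw2)
    fix p show "tri' G (tens (basisv p) b) = sw2 (basisv p) (\<lambda>c d. G c d b)"
      by (simp only: b sw2_basisv)
  qed
qed

lemma tri_tens: "tri G (tens a E) = sw2 E (\<lambda>c d. G a c d)"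
proof -
  have b: "tri G (tens (basisv i) E) = sw2 E (\<lambda>c d. G (basisv i) c d)" for i
  proof (rule linear_eq[where f = "\<lambda>E. tri G (tens (basisv i) E)"])
    show "linear_map (\<lambda>E. tri G (tens (basisv i) E))"
      by (rule linear_comp[OF linear_tri linear_tens2])
    show "linear_map (\<lambda>E. sw2 E (\<lambda>c d. G (basisv i) c d))" by (rule linear_sw2)
    fix q show "tri G (tens (basisv i) (basisv q)) = sw2 (basisv q) (\<lambda>c d. G (basisv i) c d)"
      by (simp only: tens_basisv tri_def lin_ext_basisv fst_conv snd_conv sw2_basisv)
  qed
  show ?thesis
  proof (rule linear_eq[where f = "\<lambda>a. tri G (tens a E)"])
    show "linear_map (\<lambda>a. tri G (tens a E))" by (rule linear_comp[OF linear_tri linear_tens1])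
    show "linear_map (\<lambda>a. sw2 E (\<lambda>c d. G a c d))" by (rule sw2_linear_fun) (rule G1)
    fix p show "tri G (tens (basisv p) E) = sw2 E (\<lambda>c d. G (basisv p) c d)"
      by (rule b)
  qed
qed

end

lemma coassoc_transfer:
  assumes coass: "reassoc (sw2 X (\<lambda>a b. tens (\<Delta> a) b)) = sw2 X (\<lambda>a b. tens a (\<Delta> b))"
    and "trilin G"
  shows "sw2 X (\<lambda>a b. sw2 (\<Delta> a) (\<lambda>c d. G c d b)) = sw2 X (\<lambda>a b. sw2 (\<Delta> b) (\<lambda>c d. G a c d))"
proof -
  interpret trilin G by fact
  have "sw2 X (\<lambda>a b. sw2 (\<Delta> a) (\<lambda>c d. G c d b)) = sw2 X (\<lambda>a b. tri' G (tens (\<Delta> a) b))"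
    by (simp add: tri'_tens)
  also have "\<dots> = tri' G (sw2 X (\<lambda>a b. tens (\<Delta> a) b))"
    by (rule sw2_comp[OF linear_tri', symmetric])
  also have "\<dots> = tri G (sw2 X (\<lambda>a b. tens a (\<Delta> b)))"
    by (simp add: tri_reassoc[symmetric] coass)
  also have "\<dots> = sw2 X (\<lambda>a b. tri G (tens a (\<Delta> b)))"
    by (rule sw2_comp[OF linear_tri])
  also have "\<dots> = sw2 X (\<lambda>a b. sw2 (\<Delta> b) (\<lambda>c d. G a c d))"
    by (simp add: tri_tens)
  finally show ?thesis .
qed


locale rpha =
  fixes mult :: "('b \<Rightarrow>\<^sub>0 'k::field) \<Rightarrow> ('b \<Rightarrow>\<^sub>0 'k) \<Rightarrow> ('b \<Rightarrow>\<^sub>0 'k)"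
    and u :: "'b \<Rightarrow>\<^sub>0 'k"
    and \<Delta> :: "('b \<Rightarrow>\<^sub>0 'k) \<Rightarrow> ('b \<times> 'b \<Rightarrow>\<^sub>0 'k)"
    and \<epsilon> :: "('b \<Rightarrow>\<^sub>0 'k) \<Rightarrow> 'k"
    and rhd :: "('b \<Rightarrow>\<^sub>0 'k) \<Rightarrow> ('b \<Rightarrow>\<^sub>0 'k) \<Rightarrow> ('b \<Rightarrow>\<^sub>0 'k)"
  assumes rpha: "right_post_hopf_algebra mult u \<Delta> \<epsilon> rhd"
begin

lemma hopf: "hopf_algebra mult u \<Delta> \<epsilon>"
  using rpha by (simp add: right_post_hopf_algebra_def)

lemma mult1: "linear_map (\<lambda>x. mult x y)"
  using hopf by (simp add: hopf_algebra_def bilinear_map_def)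
lemma mult2: "linear_map (\<lambda>y. mult x y)"
  using hopf unfolding hopf_algebra_def bilinear_map_def by blast
lemma mult_assoc: "mult (mult x y) z = mult x (mult y z)"
  using hopf by (simp add: hopf_algebra_def)
lemma mult_u: "mult u x = x" "mult x u = x"
  using hopf by (simp_all add: hopf_algebra_def)
lemma lin_Delta: "linear_map \<Delta>"
  using hopf by (simp add: hopf_algebra_def)
lemma lin_eps: "linear_functional \<epsilon>"
  using hopf by (simp add: hopf_algebra_def)
lemma coassoc: "reassoc (sw2 (\<Delta> x) (\<lambda>a b. tens (\<Delta> a) b)) = sw2 (\<Delta> x) (\<lambda>a b. tens a (\<Delta> b))"
  using hopf by (simp add: hopf_algebra_def)
lemma counit: "sw2 (\<Delta> x) (\<lambda>a b. vsmul (\<epsilon> a) b) = x" "sw2 (\<Delta> x) (\<lambda>a b. vsmul (\<epsilon> b) a) = x"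
  using hopf by (simp_all add: hopf_algebra_def)
lemma Delta_u: "\<Delta> u = tens u u"
  using hopf by (simp add: hopf_algebra_def)
lemma eps_u: "\<epsilon> u = 1"
  using hopf by (simp add: hopf_algebra_def)
lemma antipode: obtains S where "linear_map S"
  "\<And>x. sw2 (\<Delta> x) (\<lambda>a b. mult (S a) b) = vsmul (\<epsilon> x) u"
proof -
  have "\<exists>S. linear_map S \<and>
        (\<forall>x. sw2 (\<Delta> x) (\<lambda>a b. mult (S a) b) = vsmul (\<epsilon> x) u \<and>
             sw2 (\<Delta> x) (\<lambda>a b. mult a (S b)) = vsmul (\<epsilon> x) u)"
    using hopf unfolding hopf_algebra_def by (elim conjE) assumption
  then obtain S where S: "linear_map S" "\<forall>x. sw2 (\<Delta> x) (\<lambda>a b. mult (S a) b) = vsmul (\<epsilon> x) u \<and>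
             sw2 (\<Delta> x) (\<lambda>a b. mult a (S b)) = vsmul (\<epsilon> x) u"
    by blast
  show ?thesis by (rule that[OF S(1)]) (use S(2) in blast)
qed

lemma rhd1: "linear_map (\<lambda>x. rhd x y)"
  using rpha by (simp add: right_post_hopf_algebra_def bilinear_map_def)
lemma rhd2: "linear_map (\<lambda>y. rhd x y)"
  using rpha unfolding right_post_hopf_algebra_def bilinear_map_def by blast
lemma Delta_rhd: "\<Delta> (rhd x y) = sw2 (\<Delta> x) (\<lambda>a b. sw2 (\<Delta> y) (\<lambda>c d. tens (rhd a c) (rhd b d)))"
  using rpha by (simp add: right_post_hopf_algebra_def)
lemma eps_rhd: "\<epsilon> (rhd x y) = \<epsilon> x * \<epsilon> y"
  using rpha by (simp add: right_post_hopf_algebra_def)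
lemma rhd_mult: "rhd (mult x y) z = sw2 (\<Delta> z) (\<lambda>c d. mult (rhd x c) (rhd y d))"
  using rpha by (simp add: right_post_hopf_algebra_def)

lemma eps_smul: "\<epsilon> (vsmul c x) = c * \<epsilon> x"
  using lin_eps by (simp add: linear_functional_def)

lemma mult_smul1: "mult (vsmul c x) y = vsmul c (mult x y)"
  using linear_smul[OF mult1] .

lemma u_rhd: "rhd u z = vsmul (\<epsilon> z) u"
proof -
  define f where "f = rhd u"
  have linf: "linear_map f" unfolding f_def by (rule rhd2)
  obtain S where linS: "linear_map S" and S: "\<And>x. sw2 (\<Delta> x) (\<lambda>a b. mult (S a) b) = vsmul (\<epsilon> x) u"
    by (rule antipode, blast)
  have Df: "\<Delta> (f z) = sw2 (\<Delta> z) (\<lambda>c d. tens (f c) (f d))" for z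
  proof -
    have "\<Delta> (f z) = sw2 (tens u u) (\<lambda>a b. sw2 (\<Delta> z) (\<lambda>c d. tens (rhd a c) (rhd b d)))"
      unfolding f_def Delta_rhd Delta_u ..
    also have "\<dots> = sw2 (\<Delta> z) (\<lambda>c d. tens (rhd u c) (rhd u d))"
    proof (rule sw2_tens[where F = "\<lambda>a b. sw2 (\<Delta> z) (\<lambda>c d. tens (rhd a c) (rhd b d))"])
      fix y show "linear_map (\<lambda>x. sw2 (\<Delta> z) (\<lambda>c d. tens (rhd x c) (rhd y d)))"
        by (rule sw2_linear_fun, rule linear_comp[OF linear_tens1 rhd1])
    next
      fix x show "linear_map (\<lambda>y. sw2 (\<Delta> z) (\<lambda>c d. tens (rhd x c) (rhd y d)))"
        by (rule sw2_linear_fun, rule linear_comp[OF linear_tens2 rhd1])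
    qed
    finally show ?thesis unfolding f_def .
  qed
  have ef: "\<epsilon> (f z) = \<epsilon> z" for z unfolding f_def by (simp add: eps_rhd eps_u)
  have ff: "f z = sw2 (\<Delta> z) (\<lambda>c d. mult (f c) (f d))" for z
    using rhd_mult[of u u z] by (simp add: mult_u f_def)
  have A: "sw2 (\<Delta> z) (\<lambda>c d. mult (S (f c)) (f d)) = vsmul (\<epsilon> z) u" for z
  proof -
    have "vsmul (\<epsilon> z) u = sw2 (\<Delta> (f z)) (\<lambda>a b. mult (S a) b)" by (simp add: S ef)
    also have "\<dots> = sw2 (\<Delta> z) (\<lambda>c d. sw2 (tens (f c) (f d)) (\<lambda>a b. mult (S a) b))"
      unfolding Df by (rule sw2_comp[OF linear_sw2])
    also have "\<dots> = sw2 (\<Delta> z) (\<lambda>c d. mult (S (f c)) (f d))"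
    proof (rule sw2_cong, rule sw2_tens)
      fix y show "linear_map (\<lambda>x. mult (S x) y)" by (rule linear_comp[OF mult1 linS])
    next
      fix x show "linear_map (\<lambda>y. mult (S x) y)" by (rule mult2)
    qed
    finally show ?thesis by simp
  qed
  have tl: "trilin (\<lambda>c d b. mult (S (f c)) (mult (f d) (f b)))"
  proof
    fix y z show "linear_map (\<lambda>x. mult (S (f x)) (mult (f y) (f z)))"
      by (rule linear_comp[OF mult1], rule linear_comp[OF linS linf])
  next
    fix x z show "linear_map (\<lambda>y. mult (S (f x)) (mult (f y) (f z)))"
      by (rule linear_comp[OF mult2], rule linear_comp[OF mult1 linf])
  next
    fix x y show "linear_map (\<lambda>z. mult (S (f x)) (mult (f y) (f z)))"
      by (rule linear_comp[OF mult2], rule linear_comp[OF mult2 linf])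
  qed
  have "f z = f (sw2 (\<Delta> z) (\<lambda>a b. vsmul (\<epsilon> a) b))" by (simp add: counit)
  also have "\<dots> = sw2 (\<Delta> z) (\<lambda>a b. vsmul (\<epsilon> a) (f b))"
    by (simp add: sw2_comp[OF linf] linear_smul[OF linf])
  also have "\<dots> = sw2 (\<Delta> z) (\<lambda>a b. mult (sw2 (\<Delta> a) (\<lambda>c d. mult (S (f c)) (f d))) (f b))"
    by (simp add: A mult_smul1 mult_u)
  also have "\<dots> = sw2 (\<Delta> z) (\<lambda>a b. sw2 (\<Delta> a) (\<lambda>c d. mult (S (f c)) (mult (f d) (f b))))"
    by (rule sw2_cong) (simp add: sw2_comp[OF mult1] mult_assoc)
  also have "\<dots> = sw2 (\<Delta> z) (\<lambda>a b. sw2 (\<Delta> b) (\<lambda>c d. mult (S (f a)) (mult (f c) (f d))))"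
    by (rule coassoc_transfer[OF coassoc tl])
  also have "\<dots> = sw2 (\<Delta> z) (\<lambda>a b. mult (S (f a)) (f b))"
  proof (rule sw2_cong)
    fix a b
    have "mult (S (f a)) (f b) = mult (S (f a)) (sw2 (\<Delta> b) (\<lambda>c d. mult (f c) (f d)))"
      by (subst ff[of b]) (rule refl)
    also have "\<dots> = sw2 (\<Delta> b) (\<lambda>c d. mult (S (f a)) (mult (f c) (f d)))"
      by (rule sw2_comp[OF mult2])
    finally show "sw2 (\<Delta> b) (\<lambda>c d. mult (S (f a)) (mult (f c) (f d))) = mult (S (f a)) (f b)" by simp
  qed
  also have "\<dots> = vsmul (\<epsilon> z) u" by (rule A)
  finally show ?thesis unfolding f_def .
qed

end


definition consw :: "('b \<Rightarrow>\<^sub>0 'k::field) \<Rightarrow> ('b list \<Rightarrow>\<^sub>0 'k) \<Rightarrow> ('b list \<Rightarrow>\<^sub>0 'k)" where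
  "consw a R = lin_ext (\<lambda>i. lin_ext (\<lambda>w. basisv (i # w)) R) a"
definition cons2 :: "('b \<times> 'b \<Rightarrow>\<^sub>0 'k::field) \<Rightarrow> ('b list \<Rightarrow>\<^sub>0 'k) \<Rightarrow> ('b list \<Rightarrow>\<^sub>0 'k)" where
  "cons2 D R = lin_ext (\<lambda>p. lin_ext (\<lambda>w. basisv (fst p # snd p # w)) R) D"

lemma linear_consw1: "linear_map (\<lambda>a. consw a R)"
  unfolding consw_def by (rule linear_lin_ext)
lemma linear_consw2: "linear_map (\<lambda>R. consw a R)"
  unfolding consw_def by (rule lin_ext_linear_fun) (rule linear_lin_ext)
lemma linear_cons21: "linear_map (\<lambda>D. cons2 D R)"
  unfolding cons2_def by (rule linear_lin_ext)
lemma linear_cons22: "linear_map (\<lambda>R. cons2 D R)"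
  unfolding cons2_def by (rule lin_ext_linear_fun) (rule linear_lin_ext)
lemma consw_basisv[simp]: "consw (basisv i) (basisv w) = basisv (i # w)"
  by (simp add: consw_def)
lemma cons2_basisv[simp]: "cons2 (basisv p) (basisv w) = basisv (fst p # snd p # w)"
  by (simp add: cons2_def)

lemma bilin_expand:
  assumes G1: "\<And>Y. linear_map (\<lambda>T. G T Y)" and G2: "\<And>T. linear_map (\<lambda>Y. G T Y)"
  shows "G T Y = lin_ext (\<lambda>w. lin_ext (\<lambda>v. G (basisv w) (basisv v)) Y) T"
proof -
  have "G T Y = lin_ext (\<lambda>w. G (basisv w) Y) T" by (rule linear_unique[OF G1])
  also have "\<dots> = lin_ext (\<lambda>w. lin_ext (\<lambda>v. G (basisv w) (basisv v)) Y) T"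
    by (subst linear_unique[OF G2]) (rule refl)
  finally show ?thesis .
qed

lemma bilin_eq:
  assumes "\<And>Y. linear_map (\<lambda>T. G T Y)" "\<And>T. linear_map (\<lambda>Y. G T Y)"
    "\<And>Y. linear_map (\<lambda>T. H T Y)" "\<And>T. linear_map (\<lambda>Y. H T Y)"
    "\<And>w v. G (basisv w) (basisv v) = H (basisv w) (basisv v)"
  shows "G T Y = H T Y"
  by (subst bilin_expand[of G], (fact assms)+, subst bilin_expand[of H], (fact assms)+) (simp add: assms(5))

lemma cons2_tens: "cons2 (tens a b) R = consw a (consw b R)"
proof -
  have "cons2 (tens (basisv i) b) R = consw (basisv i) (consw b R)" for i
  proof (rule bilin_eq[where G = "\<lambda>b R. cons2 (tens (basisv i) b) R" and H = "\<lambda>b R. consw (basisv i) (consw b R)"])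
    show "linear_map (\<lambda>b. cons2 (tens (basisv i) b) R)" for R by (rule linear_comp[OF linear_cons21 linear_tens2])
    show "linear_map (\<lambda>R. cons2 (tens (basisv i) b) R)" for b by (rule linear_cons22)
    show "linear_map (\<lambda>b. consw (basisv i) (consw b R))" for R by (rule linear_comp[OF linear_consw2 linear_consw1])
    show "linear_map (\<lambda>R. consw (basisv i) (consw b R))" for b by (rule linear_comp[OF linear_consw2 linear_consw2])
  qed simp
  then show ?thesis
    by (rule linear_eq[where f = "\<lambda>a. cons2 (tens a b) R", rotated 2])
       (rule linear_comp[OF linear_cons21 linear_tens1], rule linear_comp[OF linear_consw1 linear_id])
qed

fun ltens :: "('b \<Rightarrow>\<^sub>0 'k::field) list \<Rightarrow> ('b list \<Rightarrow>\<^sub>0 'k)" where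
  "ltens [] = basisv []"
| "ltens (a # as) = consw a (ltens as)"

definition Pw :: "(('b \<Rightarrow>\<^sub>0 'k::field) \<Rightarrow> ('b \<Rightarrow>\<^sub>0 'k) \<Rightarrow> ('b \<Rightarrow>\<^sub>0 'k)) \<Rightarrow> 'b list \<Rightarrow> 'b list \<Rightarrow> ('b list \<Rightarrow>\<^sub>0 'k)" where
  "Pw r w v = ltens (map2 (\<lambda>i j. r (basisv i) (basisv j)) w v)"

definition Psi :: "(('b \<Rightarrow>\<^sub>0 'k::field) \<Rightarrow> ('b \<Rightarrow>\<^sub>0 'k) \<Rightarrow> ('b \<Rightarrow>\<^sub>0 'k)) \<Rightarrow> ('b list \<Rightarrow>\<^sub>0 'k) \<Rightarrow> ('b list \<Rightarrow>\<^sub>0 'k) \<Rightarrow> ('b list \<Rightarrow>\<^sub>0 'k)" where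
  "Psi r T Y = lin_ext (\<lambda>w. lin_ext (\<lambda>v. Pw r w v) Y) T"

lemma linear_Psi1: "linear_map (\<lambda>T. Psi r T Y)"
  unfolding Psi_def by (rule linear_lin_ext)
lemma linear_Psi2: "linear_map (\<lambda>Y. Psi r T Y)"
  unfolding Psi_def by (rule lin_ext_linear_fun) (rule linear_lin_ext)
lemma Psi_basisv[simp]: "Psi r (basisv w) (basisv v) = Pw r w v"
  by (simp add: Psi_def)
lemma Pw_Cons[simp]: "Pw r (i # w) (j # v) = consw (r (basisv i) (basisv j)) (Pw r w v)"
  by (simp add: Pw_def)
lemma Pw_Nil[simp]: "Pw r [] [] = basisv []"
  by (simp add: Pw_def)

definition St :: "(('b \<Rightarrow>\<^sub>0 'k::field) \<Rightarrow> ('b \<times> 'b \<Rightarrow>\<^sub>0 'k)) \<Rightarrow> ('b list \<Rightarrow>\<^sub>0 'k) \<Rightarrow> ('b list \<Rightarrow>\<^sub>0 'k)" where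
  "St h T = lin_ext (\<lambda>w. cons2 (h (basisv (hd w))) (basisv (tl w))) T"

lemma linear_St: "linear_map (St h)"
  unfolding St_def by (rule linear_lin_ext)
lemma St_basisv: "St h (basisv (i # w)) = cons2 (h (basisv i)) (basisv w)"
  by (simp add: St_def)

lemma St_consw: assumes h: "linear_map h" shows "St h (consw a R) = cons2 (h a) R"
proof (rule bilin_eq[where G = "\<lambda>a R. St h (consw a R)" and H = "\<lambda>a R. cons2 (h a) R"])
  show "linear_map (\<lambda>a. St h (consw a R))" for R by (rule linear_comp[OF linear_St linear_consw1])
  show "linear_map (\<lambda>R. St h (consw a R))" for a by (rule linear_comp[OF linear_St linear_consw2])
  show "linear_map (\<lambda>a. cons2 (h a) R)" for R by (rule linear_comp[OF linear_cons21 h])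
  show "linear_map (\<lambda>R. cons2 (h a) R)" for a by (rule linear_cons22)
qed (simp add: St_basisv)

lemma lin_ext_lookup0: "(\<And>p. Poly_Mapping.lookup (g p) q = 0) \<Longrightarrow> Poly_Mapping.lookup (lin_ext g t) q = 0"
  by (simp add: lin_ext_def lookup_sum)
lemma consw_nil: "Poly_Mapping.lookup (consw a R) [] = 0"
  unfolding consw_def by (intro lin_ext_lookup0) (simp add: basisv_def lookup_single)
lemma cons2_nil: "Poly_Mapping.lookup (cons2 D R) [] = 0"
  unfolding cons2_def by (intro lin_ext_lookup0) (simp add: basisv_def lookup_single)
lemma St_nil: "Poly_Mapping.lookup (St h T) [] = 0"
  unfolding St_def by (intro lin_ext_lookup0 cons2_nil)


lemma iter0: "iter_red_coprod u \<Delta> \<epsilon> 0 x = consw (rho_map u \<epsilon> x) (basisv [])"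
  by (simp add: sum_single_lin_ext consw_def)

lemma iterSuc: "iter_red_coprod u \<Delta> \<epsilon> (Suc k) x = St (red_coprod u \<Delta> \<epsilon>) (iter_red_coprod u \<Delta> \<epsilon> k x)"
proof -
  have "iter_red_coprod u \<Delta> \<epsilon> (Suc k) x = lin_ext (\<lambda>w. lin_ext (\<lambda>p. basisv (fst p # snd p # tl w)) (red_coprod u \<Delta> \<epsilon> (basisv (hd w)))) (iter_red_coprod u \<Delta> \<epsilon> k x)"
    by (simp only: iter_red_coprod.simps Let_def sum_single_lin_ext lin_ext_def)
  then show ?thesis by (simp add: St_def cons2_def)
qed

fun Dk :: "(('b \<Rightarrow>\<^sub>0 'k::field) \<Rightarrow> ('b \<times> 'b \<Rightarrow>\<^sub>0 'k)) \<Rightarrow> nat \<Rightarrow> ('b \<Rightarrow>\<^sub>0 'k) \<Rightarrow> ('b list \<Rightarrow>\<^sub>0 'k)" where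
  "Dk \<Delta> 0 y = consw y (basisv [])"
| "Dk \<Delta> (Suc k) y = St \<Delta> (Dk \<Delta> k y)"

lemma Dk_nil: "Poly_Mapping.lookup (Dk \<Delta> k y) [] = 0"
  by (cases k) (simp_all add: consw_nil St_nil)
lemma iter_nil: "Poly_Mapping.lookup (iter_red_coprod u \<Delta> \<epsilon> k x) [] = 0"
  by (cases k) (simp_all only: iter0 iterSuc consw_nil St_nil)


context rpha
begin

definition Fm :: "('b \<times> 'b \<Rightarrow>\<^sub>0 'k) \<Rightarrow> ('b \<times> 'b \<Rightarrow>\<^sub>0 'k) \<Rightarrow> ('b \<times> 'b \<Rightarrow>\<^sub>0 'k)" where
  "Fm D E = sw2 D (\<lambda>a' a''. sw2 E (\<lambda>b1 b2. tens (rhd a' b1) (rhd a'' b2)))"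

lemma linear_Fm1: "linear_map (\<lambda>D. Fm D E)"
  unfolding Fm_def by (rule linear_sw2)
lemma linear_Fm2: "linear_map (\<lambda>E. Fm D E)"
  unfolding Fm_def by (rule sw2_linear_fun) (rule linear_sw2)

lemma K1: "Psi rhd (consw a T) (consw b Y) = consw (rhd a b) (Psi rhd T Y)"
proof -
  have bas: "Psi rhd (consw (basisv i) T) (consw (basisv j) Y) = consw (rhd (basisv i) (basisv j)) (Psi rhd T Y)" for i j
  proof (rule bilin_eq[where G = "\<lambda>T Y. Psi rhd (consw (basisv i) T) (consw (basisv j) Y)"
        and H = "\<lambda>T Y. consw (rhd (basisv i) (basisv j)) (Psi rhd T Y)"])
    show "linear_map (\<lambda>T. Psi rhd (consw (basisv i) T) (consw (basisv j) Y))" for Y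
      by (rule linear_comp[OF linear_Psi1 linear_consw2])
    show "linear_map (\<lambda>Y. Psi rhd (consw (basisv i) T) (consw (basisv j) Y))" for T
      by (rule linear_comp[OF linear_Psi2 linear_consw2])
    show "linear_map (\<lambda>T. consw (rhd (basisv i) (basisv j)) (Psi rhd T Y))" for Y
      by (rule linear_comp[OF linear_consw2 linear_Psi1])
    show "linear_map (\<lambda>Y. consw (rhd (basisv i) (basisv j)) (Psi rhd T Y))" for T
      by (rule linear_comp[OF linear_consw2 linear_Psi2])
  qed simp
  show ?thesis
  proof (rule bilin_eq[where G = "\<lambda>a b. Psi rhd (consw a T) (consw b Y)" and H = "\<lambda>a b. consw (rhd a b) (Psi rhd T Y)"])
    show "linear_map (\<lambda>a. Psi rhd (consw a T) (consw b Y))" for b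
      by (rule linear_comp[OF linear_Psi1 linear_consw1])
    show "linear_map (\<lambda>b. Psi rhd (consw a T) (consw b Y))" for a
      by (rule linear_comp[OF linear_Psi2 linear_consw1])
    show "linear_map (\<lambda>a. consw (rhd a b) (Psi rhd T Y))" for b
      by (rule linear_comp[OF linear_consw1 rhd1])
    show "linear_map (\<lambda>b. consw (rhd a b) (Psi rhd T Y))" for a
      by (rule linear_comp[OF linear_consw1 rhd2])
  qed (rule bas)
qed

lemma K2: "Psi rhd (cons2 D T) (cons2 E Y) = cons2 (Fm D E) (Psi rhd T Y)"
proof -
  have bas: "Psi rhd (cons2 (basisv p) T) (cons2 (basisv q) Y) = cons2 (Fm (basisv p) (basisv q)) (Psi rhd T Y)" for p q
  proof (rule bilin_eq[where G = "\<lambda>T Y. Psi rhd (cons2 (basisv p) T) (cons2 (basisv q) Y)"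
        and H = "\<lambda>T Y. cons2 (Fm (basisv p) (basisv q)) (Psi rhd T Y)"])
    show "linear_map (\<lambda>T. Psi rhd (cons2 (basisv p) T) (cons2 (basisv q) Y))" for Y
      by (rule linear_comp[OF linear_Psi1 linear_cons22])
    show "linear_map (\<lambda>Y. Psi rhd (cons2 (basisv p) T) (cons2 (basisv q) Y))" for T
      by (rule linear_comp[OF linear_Psi2 linear_cons22])
    show "linear_map (\<lambda>T. cons2 (Fm (basisv p) (basisv q)) (Psi rhd T Y))" for Y
      by (rule linear_comp[OF linear_cons22 linear_Psi1])
    show "linear_map (\<lambda>Y. cons2 (Fm (basisv p) (basisv q)) (Psi rhd T Y))" for T
      by (rule linear_comp[OF linear_cons22 linear_Psi2])
  qed (simp add: Fm_def cons2_tens)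
  show ?thesis
  proof (rule bilin_eq[where G = "\<lambda>D E. Psi rhd (cons2 D T) (cons2 E Y)" and H = "\<lambda>D E. cons2 (Fm D E) (Psi rhd T Y)"])
    show "linear_map (\<lambda>D. Psi rhd (cons2 D T) (cons2 E Y))" for E
      by (rule linear_comp[OF linear_Psi1 linear_cons21])
    show "linear_map (\<lambda>E. Psi rhd (cons2 D T) (cons2 E Y))" for D
      by (rule linear_comp[OF linear_Psi2 linear_cons21])
    show "linear_map (\<lambda>D. cons2 (Fm D E) (Psi rhd T Y))" for E
      by (rule linear_comp[OF linear_cons21 linear_Fm1])
    show "linear_map (\<lambda>E. cons2 (Fm D E) (Psi rhd T Y))" for D
      by (rule linear_comp[OF linear_cons21 linear_Fm2])
  qed (rule bas)
qed


lemma red_eq: "red_coprod u \<Delta> \<epsilon> = (\<lambda>x. \<Delta> x - tens u x - tens x u + vsmul (\<epsilon> x) (tens u u))"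
  by (rule ext) (simp add: red_coprod_def)

lemma linear_red: "linear_map (red_coprod u \<Delta> \<epsilon>)"
  unfolding red_eq
  by (intro linear_plus linear_minus lin_Delta linear_tens1 linear_tens2 linear_functional_smul lin_eps)

lemma tens_smul1: "tens (vsmul c x) y = vsmul c (tens x y)"
  using linear_smul[OF linear_tens1] .
lemma tens_smul2: "tens x (vsmul c y) = vsmul c (tens x y)"
  using linear_smul[OF linear_tens2] .
lemma rhd_smul2: "rhd x (vsmul c y) = vsmul c (rhd x y)"
  using linear_smul[OF rhd2] .
lemma rhd_smul1: "rhd (vsmul c x) y = vsmul c (rhd x y)"
  using linear_smul[OF rhd1] .

lemma Fm_tens: "Fm (tens x y) E = sw2 E (\<lambda>b1 b2. tens (rhd x b1) (rhd y b2))"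
  unfolding Fm_def
proof (rule sw2_tens[where F = "\<lambda>a' a''. sw2 E (\<lambda>b1 b2. tens (rhd a' b1) (rhd a'' b2))"])
  fix y show "linear_map (\<lambda>x. sw2 E (\<lambda>c d. tens (rhd x c) (rhd y d)))"
    by (rule sw2_linear_fun, rule linear_comp[OF linear_tens1 rhd1])
next
  fix x show "linear_map (\<lambda>y. sw2 E (\<lambda>c d. tens (rhd x c) (rhd y d)))"
    by (rule sw2_linear_fun, rule linear_comp[OF linear_tens2 rhd1])
qed

lemma K4: "red_coprod u \<Delta> \<epsilon> (rhd a b) = Fm (red_coprod u \<Delta> \<epsilon> a) (\<Delta> b)"
proof -
  have T1: "Fm (tens u a) (\<Delta> b) = tens u (rhd a b)"
  proof -
    have "Fm (tens u a) (\<Delta> b) = sw2 (\<Delta> b) (\<lambda>b1 b2. tens u (rhd a (vsmul (\<epsilon> b1) b2)))"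
      by (simp add: Fm_tens u_rhd tens_smul1 tens_smul2 rhd_smul2)
    also have "\<dots> = tens u (rhd a (sw2 (\<Delta> b) (\<lambda>b1 b2. vsmul (\<epsilon> b1) b2)))"
      by (rule sw2_comp[OF linear_comp[OF linear_tens2 rhd2], symmetric])
    finally show ?thesis by (simp only: counit)
  qed
  have T2: "Fm (tens a u) (\<Delta> b) = tens (rhd a b) u"
  proof -
    have "Fm (tens a u) (\<Delta> b) = sw2 (\<Delta> b) (\<lambda>b1 b2. tens (rhd a (vsmul (\<epsilon> b2) b1)) u)"
      by (simp add: Fm_tens u_rhd tens_smul1 tens_smul2 rhd_smul2)
    also have "\<dots> = tens (rhd a (sw2 (\<Delta> b) (\<lambda>b1 b2. vsmul (\<epsilon> b2) b1))) u"
      by (rule sw2_comp[OF linear_comp[OF linear_tens1 rhd2], symmetric])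
    finally show ?thesis by (simp only: counit)
  qed
  have T3: "Fm (tens u u) (\<Delta> b) = vsmul (\<epsilon> b) (tens u u)"
  proof -
    have "Fm (tens u u) (\<Delta> b) = sw2 (\<Delta> b) (\<lambda>b1 b2. vsmul (\<epsilon> (vsmul (\<epsilon> b1) b2)) (tens u u))"
      by (simp add: Fm_tens u_rhd tens_smul1 tens_smul2 eps_smul mult.commute)
    also have "\<dots> = vsmul (\<epsilon> (sw2 (\<Delta> b) (\<lambda>b1 b2. vsmul (\<epsilon> b1) b2))) (tens u u)"
      by (rule sw2_comp[OF linear_functional_smul[OF lin_eps], symmetric])
    finally show ?thesis by (simp only: counit)
  qed
  have "Fm (red_coprod u \<Delta> \<epsilon> a) (\<Delta> b) =
      Fm (\<Delta> a) (\<Delta> b) - Fm (tens u a) (\<Delta> b) - Fm (tens a u) (\<Delta> b) + vsmul (\<epsilon> a) (Fm (tens u u) (\<Delta> b))"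
    by (simp add: red_coprod_def linear_add[OF linear_Fm1] linear_diff[OF linear_Fm1] linear_smul[OF linear_Fm1])
  also have T0: "Fm (\<Delta> a) (\<Delta> b) = \<Delta> (rhd a b)" by (simp add: Fm_def Delta_rhd)
  have "Fm (\<Delta> a) (\<Delta> b) - Fm (tens u a) (\<Delta> b) - Fm (tens a u) (\<Delta> b) + vsmul (\<epsilon> a) (Fm (tens u u) (\<Delta> b))
      = red_coprod u \<Delta> \<epsilon> (rhd a b)"
    by (simp only: T0 T1 T2 T3 red_coprod_def eps_rhd vsmul_vsmul)
  finally show ?thesis by simp
qed

lemma K5:
  assumes T0: "Poly_Mapping.lookup T [] = 0" and Y0: "Poly_Mapping.lookup Y [] = 0"
  shows "St (red_coprod u \<Delta> \<epsilon>) (Psi rhd T Y) = Psi rhd (St (red_coprod u \<Delta> \<epsilon>) T) (St \<Delta> Y)"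
proof -
  let ?R = "red_coprod u \<Delta> \<epsilon>"
  have "St ?R (Psi rhd T Y) = lin_ext (\<lambda>w. lin_ext (\<lambda>v. St ?R (Pw rhd w v)) Y) T"
    by (simp only: Psi_def linear_lin_ext_comp[OF linear_St])
  also have "\<dots> = lin_ext (\<lambda>w. lin_ext (\<lambda>v. Psi rhd (St ?R (basisv w)) (St \<Delta> (basisv v))) Y) T"
  proof (rule lin_ext_cong, rule lin_ext_cong)
    fix w v assume w: "w \<in> Poly_Mapping.keys T" and v: "v \<in> Poly_Mapping.keys Y"
    from w T0 have "w \<noteq> []" by (auto simp: in_keys_iff)
    then obtain i w' where wi: "w = i # w'" by (cases w) auto
    from v Y0 have "v \<noteq> []" by (auto simp: in_keys_iff)
    then obtain j v' where vj: "v = j # v'" by (cases v) auto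
    show "St ?R (Pw rhd w v) = Psi rhd (St ?R (basisv w)) (St \<Delta> (basisv v))"
      by (simp add: wi vj St_basisv St_consw[OF linear_red] K2 K4)
  qed
  also have "\<dots> = Psi rhd (St ?R T) (St \<Delta> Y)"
  proof (rule bilin_expand[symmetric])
    show "linear_map (\<lambda>T. Psi rhd (St ?R T) (St \<Delta> Y))" for Y
      by (rule linear_comp[OF linear_Psi1 linear_St])
    show "linear_map (\<lambda>Y. Psi rhd (St ?R T) (St \<Delta> Y))" for T
      by (rule linear_comp[OF linear_Psi2 linear_St])
  qed
  finally show ?thesis .
qed

lemma rho_rhd: "rho_map u \<epsilon> (rhd x y) = rhd (rho_map u \<epsilon> x) y"
  by (simp add: rho_map_def linear_diff[OF rhd1] rhd_smul1 u_rhd eps_rhd)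

lemma claim: "iter_red_coprod u \<Delta> \<epsilon> k (rhd x y) = Psi rhd (iter_red_coprod u \<Delta> \<epsilon> k x) (Dk \<Delta> k y)"
proof (induct k)
  case 0
  show ?case by (simp only: iter0 Dk.simps K1 rho_rhd Psi_basisv Pw_Nil)
next
  case (Suc k)
  show ?case by (simp only: iterSuc Dk.simps Suc K5[OF iter_nil Dk_nil])
qed

end

theorem main_result:
  assumes "right_post_hopf_algebra mult u \<Delta> \<epsilon> rhd"
  shows "\<forall>n. \<forall>x \<in> coradical_filt u \<Delta> \<epsilon> n. \<forall>y. rhd x y \<in> coradical_filt u \<Delta> \<epsilon> n"
proof (intro allI ballI)
  interpret rpha mult u \<Delta> \<epsilon> rhd by standard (fact assms)
  fix n x y assume "x \<in> coradical_filt u \<Delta> \<epsilon> n"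
  then have "iter_red_coprod u \<Delta> \<epsilon> n x = 0" by (simp add: coradical_filt_def)
  then show "rhd x y \<in> coradical_filt u \<Delta> \<epsilon> n"
    by (simp add: coradical_filt_def claim Psi_def)
qed



theorem lemma3p3:
  fixes mult :: "('b \<Rightarrow>\<^sub>0 'k::field) \<Rightarrow> ('b \<Rightarrow>\<^sub>0 'k) \<Rightarrow> ('b \<Rightarrow>\<^sub>0 'k)"
    and u :: "'b \<Rightarrow>\<^sub>0 'k"
    and \<Delta> :: "('b \<Rightarrow>\<^sub>0 'k) \<Rightarrow> ('b \<times> 'b \<Rightarrow>\<^sub>0 'k)"
    and \<epsilon> :: "('b \<Rightarrow>\<^sub>0 'k) \<Rightarrow> 'k"
    and rhd :: "('b \<Rightarrow>\<^sub>0 'k) \<Rightarrow> ('b \<Rightarrow>\<^sub>0 'k) \<Rightarrow> ('b \<Rightarrow>\<^sub>0 'k)"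
  assumes "right_post_hopf_algebra mult u \<Delta> \<epsilon> rhd"
    and "coalg_connected u \<Delta> \<epsilon>"
  shows "\<forall>n. \<forall>x \<in> coradical_filt u \<Delta> \<epsilon> n. \<forall>y. rhd x y \<in> coradical_filt u \<Delta> \<epsilon> n"
  using main_result[OF assms(1)] .

end
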